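(* For $k\in\mathbb{N}$ and $n=2^k-1$, for all $1\le j<n$, $$\bar\mu^{(k)}_{n,j}=(\rho^k-1)\big(c^{(k)}_j-\pi^{(k)}_j\big).$$ Consequently, for all $1\le j<n$, $$\mu^{(k+1)}_{n,j}=\frac{\rho^{2k-1}}{\rho^{k-1}+1}\big(c^{(k)}_j-\pi^{(k)}_j\big)\ge0 .$$
   Context: $\rho=1+\sqrt2$; $\alpha_t=\rho^{\nu(t+1)-1}+1$ ($\nu(i)$ the largest $j$ with $2^j\mid i$). For $k\in\mathbb{N}$, $n=2^k-1$, $\pi^{(k)}=[\alpha_0,\dots,\alpha_{n-1}]$, indexed $\pi^{(k)}_1,\dots,\pi^{(k)}_n$. Define $c^{(k)}\in\mathbb{R}^n$ (indexed $1,\dots,n$) by $c^{(1)}=[2(\rho-1)]$, $c^{(k+1)}=[\pi^{(k)},(1+\rho^{-k})(\rho^{k-1}+1),\rho c^{(k)}-(\rho-1-\rho^{-k})\pi^{(k)}]$. Multipliers $\mu^{(k)}_{i,j}$, $i\in\{1,\dots,n,*\}$, $j\in\{1,\dots,n\}$: $\mu^{(k)}_{i,j}=\bar\mu^{(k)}_{i,j}$ for $i\ne*$ and $\mu^{(k)}_{*,j}=c^{(k)}_j+\mathbf 1\{j=1\}$. $\bar\mu^{(1)}_{1,1}=0$. For $n=2^k-1$ and $1\le i,j\le 2n+1$, $\bar\mu^{(k+1)}_{i,j}$ is the sum of: $\bar\mu^{(k)}_{i,j}\mathbf 1\{1\le i,j\le n\}+\rho^2\bar\mu^{(k)}_{i-n-1,j-n-1}\mathbf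 1\{n+2\le i,j\le 2n+1\}$; $\rho^k\mathbf 1\{(i,j)=(n,n+1)\}+\rho^2\mathbf 1\{(i,j)=(n+1,n+2)\}+(\rho-\rho^{-k})(\rho^{k-1}+1)\mathbf 1\{(i,j)=(2n+1,n+1)\}$; and $\big(1-\frac{\rho^k}{\rho^{k-1}+1}\big)(c^{(k)}_j-\pi^{(k)}_j)\mathbf 1\{i=n,1\le j\le n\}+\frac{\rho^k}{\rho^{k-1}+1}(c^{(k)}_j-\pi^{(k)}_j)\mathbf 1\{i=n+1,1\le j\le n\}+\frac{\rho^k}{\rho^{k-1}+1}\pi^{(k)}_{j-n-1}\mathbf 1\{i=n,n+2\le j\le 2n+1\}+\frac{\rho}{\rho^{k-1}+1}\pi^{(k)}_{j-n-1}\mathbf 1\{i=n+1,n+2\le j\le2n+1\}+\big((\rho+1)c^{(k)}_{j-n-1}-(1+\rho^{-k})\pi^{(k)}_{j-n-1}\big)\mathbf 1\{i=2n+1,n+2\le j\le 2n+1\}$. *)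

theory Defs
  imports Complex_Main
begin

definition rho :: real where "rho = 1 + sqrt 2"

text \<open>nu i: the largest j with 2^j dividing i (meaningful for i \<ge> 1).\<close>
definition nu :: "nat \<Rightarrow> nat" where "nu i = (GREATEST j. 2 ^ j dvd i)"

definition alpha :: "nat \<Rightarrow> real" where
  "alpha t = rho powi (int (nu (t + 1)) - 1) + 1"

definition piv :: "nat \<Rightarrow> nat \<Rightarrow> real" where
  "piv k j = (if 1 \<le> j \<and> j \<le> 2 ^ k - 1 then alpha (j - 1) else 0)"

text \<open>c^(k), indexed 1..2^k-1 (0 outside the index range); c 0 is a dummy.\<close>
primrec cvec :: "nat \<Rightarrow> nat \<Rightarrow> real" where
  "cvec 0 j = 0"
| "cvec (Suc k) j =
     (if k = 0 then (if j = 1 then 2 * (rho - 1) else 0)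
      else (let n = 2 ^ k - 1 in
        if 1 \<le> j \<and> j \<le> n then piv k j
        else if j = n + 1 then (1 + inverse (rho ^ k)) * (rho ^ (k - 1) + 1)
        else if n + 2 \<le> j \<and> j \<le> 2 * n + 1 then
          rho * cvec k (j - n - 1) - (rho - 1 - inverse (rho ^ k)) * piv k (j - n - 1)
        else 0))"

text \<open>bar mu^(k)_{i,j}, indices 1..2^k-1 (0 outside); mubar 0 is a dummy.\<close>
primrec mubar :: "nat \<Rightarrow> nat \<Rightarrow> nat \<Rightarrow> real" where
  "mubar 0 i j = 0"
| "mubar (Suc k) i j =
     (if k = 0 then 0
      else (let n = 2 ^ k - 1; ind = (\<lambda>b. if b then 1 else (0::real)) in
        if 1 \<le> i \<and> i \<le> 2 * n + 1 \<and> 1 \<le> j \<and> j \<le> 2 * n + 1 then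
          mubar k i j * ind (1 \<le> i \<and> i \<le> n \<and> 1 \<le> j \<and> j \<le> n)
        + rho ^ 2 * mubar k (i - n - 1) (j - n - 1) * ind (n + 2 \<le> i \<and> i \<le> 2 * n + 1 \<and> n + 2 \<le> j \<and> j \<le> 2 * n + 1)
        + rho ^ k * ind ((i, j) = (n, n + 1))
        + rho ^ 2 * ind ((i, j) = (n + 1, n + 2))
        + (rho - inverse (rho ^ k)) * (rho ^ (k - 1) + 1) * ind ((i, j) = (2 * n + 1, n + 1))
        + (1 - rho ^ k / (rho ^ (k - 1) + 1)) * (cvec k j - piv k j) * ind (i = n \<and> 1 \<le> j \<and> j \<le> n)
        + rho ^ k / (rho ^ (k - 1) + 1) * (cvec k j - piv k j) * ind (i = n + 1 \<and> 1 \<le> j \<and> j \<le> n)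
        + rho ^ k / (rho ^ (k - 1) + 1) * piv k (j - n - 1) * ind (i = n \<and> n + 2 \<le> j \<and> j \<le> 2 * n + 1)
        + rho / (rho ^ (k - 1) + 1) * piv k (j - n - 1) * ind (i = n + 1 \<and> n + 2 \<le> j \<and> j \<le> 2 * n + 1)
        + ((rho + 1) * cvec k (j - n - 1) - (1 + inverse (rho ^ k)) * piv k (j - n - 1))
            * ind (i = 2 * n + 1 \<and> n + 2 \<le> j \<and> j \<le> 2 * n + 1)
        else 0))"

text \<open>mu^(k)_{i,j} with row index i \<in> {1..n} \<union> {*}; * is represented by None.\<close>
fun mu :: "nat \<Rightarrow> nat option \<Rightarrow> nat \<Rightarrow> real" where
  "mu k (Some i) j = mubar k i j"
| "mu k None j = cvec k j + (if j = 1 then 1 else 0)"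

end

theory Submission imports Defs begin

lemma rho_gt1: "rho > 1" unfolding rho_def by simp
lemma rho_sq: "rho^2 = 2*rho + 1" unfolding rho_def by (simp add: power2_eq_square algebra_simps)
lemma rho_inv: "inverse rho = rho - 2"
proof -
  have "rho * (rho - 2) = 1" using rho_sq by (simp add: power2_eq_square algebra_simps)
  thus ?thesis using rho_gt1 by (metis inverse_unique)
qed

lemma nu_eq: assumes "i > 0" "2^m dvd i" "\<not> 2^(m+1) dvd i" shows "nu i = m"
  unfolding nu_def
proof (rule Greatest_equality)
  show "2^m dvd i" by fact
  fix y assume "2^y dvd (i::nat)"
  show "y \<le> m"
  proof (rule ccontr)
    assume "\<not> y \<le> m"
    hence "(2::nat)^(m+1) dvd 2^y" by (intro le_imp_power_dvd) simp
    thus False using \<open>2^y dvd i\<close> assms(3) dvd_trans by blast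
  qed
qed

lemma nu_pow: "nu (2^k) = k"
  by (rule nu_eq) auto

lemma nu_shift: assumes "1 \<le> j" "j < 2^k" shows "nu (2^k + j) = nu j"
proof -
  have "(\<lambda>y. (2::nat)^y dvd 2^k + j) = (\<lambda>y. 2^y dvd j)"
  proof
    fix y show "((2::nat)^y dvd 2^k + j) = (2^y dvd j)"
    proof (cases "y \<le> k")
      case True
      hence "(2::nat)^y dvd 2^k" by (simp add: le_imp_power_dvd)
      thus ?thesis by (simp add: dvd_add_right_iff)
    next
      case False
      hence a: "(2::nat)^k dvd 2^y" by (simp add: le_imp_power_dvd)
      have "(2::nat)^k < 2^y" using False by simp
      have n1: "\<not> 2^y dvd j"
      proof
        assume "2^y dvd j"
        hence "2^y \<le> j" using assms(1) by (intro dvd_imp_le) auto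
        thus False using assms(2) \<open>(2::nat)^k < 2^y\<close> by linarith
      qed
      have "\<not> 2^k dvd j"
      proof
        assume "2^k dvd j"
        hence "2^k \<le> j" using assms(1) by (intro dvd_imp_le) auto
        thus False using assms(2) by linarith
      qed
      hence "\<not> 2^y dvd 2^k + j" using a
        by (metis dvd_add_right_iff dvd_refl dvd_trans)
      thus ?thesis using n1 by simp
    qed
  qed
  thus ?thesis unfolding nu_def by simp
qed

lemma alpha_pos: "alpha t > 0"
  unfolding alpha_def using rho_gt1 by (simp add: add_pos_pos)

lemma piv_nonneg: "piv k j \<ge> 0" unfolding piv_def using alpha_pos by (simp add: less_imp_le)

lemma piv_low: "1 \<le> j \<Longrightarrow> j \<le> 2^k - 1 \<Longrightarrow> piv (Suc k) j = piv k j"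
  unfolding piv_def by auto

lemma piv_mid: "k \<ge> 1 \<Longrightarrow> piv (Suc k) (2^k) = rho^(k-1) + 1"
  unfolding piv_def alpha_def using nu_pow[of k] rho_gt1
  by (auto simp: power_int_def nat_diff_distrib)

lemma piv_high: assumes "1 \<le> j" "j \<le> 2^k - 1" shows "piv (Suc k) (2^k + j) = piv k j"
proof -
  have "nu (2^k + j) = nu j" using assms by (intro nu_shift) auto
  thus ?thesis using assms unfolding piv_def alpha_def by auto
qed

lemma cge: "k \<ge> 1 \<Longrightarrow> 1 \<le> j \<Longrightarrow> j \<le> 2^k - 1 \<Longrightarrow> piv k j \<le> cvec k j"
proof (induction k arbitrary: j)
  case 0 then show ?case by simp
next
  case (Suc k)
  show ?case
  proof (cases "k = 0")
    case True
    hence j: "j = 1" using Suc.prems by simp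
    have "nu 1 = 0" by (rule nu_eq) auto
    hence "piv 1 1 = rho - 1" unfolding piv_def alpha_def using rho_inv by simp
    then show ?thesis using True j rho_gt1 by simp
  next
    case False
    define N :: nat where "N = 2^k - 1"
    have hk: "(2::nat)^k = N + 1" unfolding N_def by simp
    have "(2::nat)^1 \<le> 2^k" using False by (intro power_increasing) auto
    hence N1: "N \<ge> 1" using hk by simp
    have hS: "2^(Suc k) - 1 = 2*N + 1" using hk by simp
    have rk: "rho^k > 0" using rho_gt1 by simp
    consider "j \<le> N" | "j = N + 1" | j' where "j = N + 1 + j'" "1 \<le> j'" "j' \<le> N"
    proof -
      assume a: "j \<le> N \<Longrightarrow> thesis" "j = N + 1 \<Longrightarrow> thesis" and b: "\<And>j'. j = N + 1 + j' \<Longrightarrow> 1 \<le> j' \<Longrightarrow> j' \<le> N \<Longrightarrow> thesis"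
      show thesis using Suc.prems hS a b[of "j - N - 1"] by fastforce
    qed
    then show ?thesis
    proof cases
      case 1
      have "cvec (Suc k) j = piv k j" using 1 Suc.prems False by (simp add: hk Let_def)
      moreover have "piv (Suc k) j = piv k j" using 1 Suc.prems by (intro piv_low) (auto simp: N_def)
      ultimately show ?thesis by simp
    next
      case 2
      have "cvec (Suc k) j = (1 + inverse (rho ^ k)) * (rho ^ (k - 1) + 1)" using 2 False by (simp add: hk Let_def)
      moreover have "piv (Suc k) j = rho^(k-1) + 1" using piv_mid[of k] False 2 hk by simp
      moreover have "0 \<le> inverse (rho ^ k) * (rho ^ (k - 1) + 1)" using rk rho_gt1 by (simp add: add_nonneg_nonneg)
      ultimately show ?thesis by (simp add: algebra_simps)
    next
      case 3
      have "cvec (Suc k) j = rho * cvec k j' - (rho - 1 - inverse (rho ^ k)) * piv k j'"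
        using 3 False by (simp add: hk Let_def)
      moreover have "piv (Suc k) j = piv k j'"
      proof -
        have e: "j = 2^k + j'" using 3 hk by simp
        show ?thesis unfolding e using 3 hk by (intro piv_high) auto
      qed
      moreover have "piv k j' \<le> cvec k j'" using Suc.IH[of j'] 3 False hk by simp
      moreover have "0 \<le> inverse (rho ^ k) * piv k j'" using rk piv_nonneg by simp
      moreover have "0 \<le> rho * (cvec k j' - piv k j')"
        using \<open>piv k j' \<le> cvec k j'\<close> rho_gt1 by simp
      moreover have "rho * cvec k j' - (rho - 1 - inverse (rho ^ k)) * piv k j'
          = piv k j' + rho * (cvec k j' - piv k j') + inverse (rho ^ k) * piv k j'"
        by (simp add: algebra_simps)
      ultimately show ?thesis by linarith
    qed
  qed
qed

lemma alg: fixes R X r c p m :: real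
  assumes "R^2 = 2*R+1" "X*r = 1" "m = (X-1)*(c-p)"
  shows "R^2*m + ((R+1)*c - (1+r)*p) = (R*X - 1)*(R*c - (R-1-r)*p - p)"
proof -
  have "R^2*m + ((R+1)*c - (1+r)*p) - (R*X - 1)*(R*c - (R-1-r)*p - p)
      = (R^2 - 2*R - 1)*(p - c) + R*(1 - X*r)*p"
    unfolding assms(3) by (simp add: algebra_simps power2_eq_square)
  also have "... = 0" using assms(1,2) by simp
  finally show ?thesis by simp
qed

lemma partA: "k \<ge> 1 \<Longrightarrow> 1 \<le> j \<Longrightarrow> j < 2^k - 1 \<Longrightarrow>
    mubar k (2 ^ k - 1) j = (rho ^ k - 1) * (cvec k j - piv k j)"
proof (induction k arbitrary: j)
  case 0 then show ?case by simp
next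
  case (Suc k)
  show ?case
  proof (cases "k = 0")
    case True
    then show ?thesis using Suc.prems by simp
  next
    case False
    define N :: nat where "N = 2^k - 1"
    have hk: "(2::nat)^k = N + 1" unfolding N_def by simp
    have "(2::nat)^1 \<le> 2^k" using False by (intro power_increasing) auto
    hence N1: "N \<ge> 1" using hk by simp
    have hS: "2^(Suc k) - 1 = 2*N + 1" using hk by simp
    have rk: "rho^k > 0" using rho_gt1 by simp
    consider "j \<le> N" | "j = N + 1" | j' where "j = N + 1 + j'" "1 \<le> j'" "j' < N"
    proof -
      assume a: "j \<le> N \<Longrightarrow> thesis" "j = N + 1 \<Longrightarrow> thesis" and b: "\<And>j'. j = N + 1 + j' \<Longrightarrow> 1 \<le> j' \<Longrightarrow> j' < N \<Longrightarrow> thesis"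
      show thesis using Suc.prems hS a b[of "j - N - 1"] by fastforce
    qed
    then show ?thesis
    proof cases
      case 1
      have "mubar (Suc k) (2*N+1) j = 0" using 1 Suc.prems False N1 by (simp add: hk Let_def)
      moreover have "cvec (Suc k) j = piv k j" using 1 Suc.prems False by (simp add: hk Let_def)
      moreover have "piv (Suc k) j = piv k j" using 1 Suc.prems by (intro piv_low) (auto simp: N_def)
      ultimately show ?thesis using hS by simp
    next
      case 2
      have "mubar (Suc k) (2*N+1) j = (rho - inverse (rho ^ k)) * (rho ^ (k - 1) + 1)" using 2 False N1 by (simp add: hk Let_def)
      moreover have "cvec (Suc k) j = (1 + inverse (rho ^ k)) * (rho ^ (k - 1) + 1)" using 2 False by (simp add: hk Let_def)
      moreover have "piv (Suc k) j = rho^(k-1) + 1" using piv_mid[of k] False 2 hk by simp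
      moreover have "rho - inverse (rho ^ k) = (rho ^ Suc k - 1) * inverse (rho ^ k)"
      proof -
        have "rho ^ Suc k * inverse (rho ^ k) = rho" using rk rho_gt1 by simp
        thus ?thesis by (simp add: algebra_simps)
      qed
      ultimately show ?thesis using hS by (simp add: algebra_simps)
    next
      case 3
      have "mubar (Suc k) (2*N+1) j = rho^2 * mubar k N j' + ((rho + 1) * cvec k j' - (1 + inverse (rho ^ k)) * piv k j')"
        using 3 False N1 by (simp add: hk Let_def)
      moreover have "cvec (Suc k) j = rho * cvec k j' - (rho - 1 - inverse (rho ^ k)) * piv k j'"
        using 3 False by (simp add: hk Let_def)
      moreover have "piv (Suc k) j = piv k j'"
      proof -
        have e: "j = 2^k + j'" using 3 hk by simp
        show ?thesis unfolding e using 3 hk by (intro piv_high) auto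
      qed
      moreover have "mubar k N j' = (rho ^ k - 1) * (cvec k j' - piv k j')" using Suc.IH[of j'] 3 False hk by simp
      moreover have "rho ^ k * inverse (rho ^ k) = 1" using rho_gt1 by simp
      ultimately have "mubar (Suc k) (2*N+1) j = (rho * rho ^ k - 1) * (cvec (Suc k) j - piv (Suc k) j)"
        using alg[OF rho_sq, of "rho ^ k" "inverse (rho ^ k)" "mubar k N j'" "cvec k j'" "piv k j'"]
        by simp
      thus ?thesis using hS by simp
    qed
  qed
qed

theorem lemma15:
  fixes k :: nat
  assumes "k \<ge> 1"
  shows "(\<forall>j. 1 \<le> j \<and> j < 2 ^ k - 1 \<longrightarrow>
            mubar k (2 ^ k - 1) j = (rho ^ k - 1) * (cvec k j - piv k j))
       \<and> (\<forall>j. 1 \<le> j \<and> j < 2 ^ k - 1 \<longrightarrow>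
            mu (k + 1) (Some (2 ^ k - 1)) j
              = rho ^ (2 * k - 1) / (rho ^ (k - 1) + 1) * (cvec k j - piv k j)
            \<and> mu (k + 1) (Some (2 ^ k - 1)) j \<ge> 0)"
proof -
  define N :: nat where "N = 2^k - 1"
  have hk: "(2::nat)^k = N + 1" unfolding N_def by simp
  have "(2::nat)^1 \<le> 2^k" using assms by (intro power_increasing) auto
  hence N1: "N \<ge> 1" using hk by simp
  have k0: "k \<noteq> 0" using assms by simp
  define D where "D = rho ^ (k - 1) + 1"
  have D0: "D > 0" unfolding D_def using rho_gt1 by (simp add: add_pos_pos)
  have pw: "rho ^ (2 * k - 1) = rho ^ k * rho ^ (k - 1)"
  proof -
    have "2 * k - 1 = k + (k - 1)" using assms by simp
    thus ?thesis by (simp add: power_add)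
  qed
  have B: "mu (k + 1) (Some (2 ^ k - 1)) j
              = rho ^ (2 * k - 1) / (rho ^ (k - 1) + 1) * (cvec k j - piv k j)"
    if j: "1 \<le> j" "j < 2 ^ k - 1" for j
  proof -
    have "mu (k + 1) (Some (2 ^ k - 1)) j = mubar (Suc k) N j" by (simp add: N_def)
    also have "... = mubar k N j + (1 - rho ^ k / D) * (cvec k j - piv k j)"
      using j N1 k0 by (simp add: hk Let_def D_def)
    also have "mubar k N j = (rho ^ k - 1) * (cvec k j - piv k j)"
      using partA[OF assms j] by (simp add: N_def)
    also have "(rho ^ k - 1) * (cvec k j - piv k j) + (1 - rho ^ k / D) * (cvec k j - piv k j)
        = (rho ^ k - rho ^ k / D) * (cvec k j - piv k j)" by (simp add: algebra_simps)
    also have "rho ^ k - rho ^ k / D = rho ^ (2 * k - 1) / D"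
      using D0 unfolding pw by (simp add: field_simps D_def)
    finally show ?thesis by (simp add: D_def)
  qed
  show ?thesis
  proof (intro conjI allI impI)
    fix j :: nat assume "1 \<le> j \<and> j < 2 ^ k - 1"
    thus "mubar k (2 ^ k - 1) j = (rho ^ k - 1) * (cvec k j - piv k j)"
      using partA[OF assms] by blast
  next
    fix j :: nat assume j: "1 \<le> j \<and> j < 2 ^ k - 1"
    thus "mu (k + 1) (Some (2 ^ k - 1)) j
              = rho ^ (2 * k - 1) / (rho ^ (k - 1) + 1) * (cvec k j - piv k j)"
      using B by blast
  next
    fix j :: nat assume j: "1 \<le> j \<and> j < 2 ^ k - 1"
    have "cvec k j - piv k j \<ge> 0" using cge[OF assms, of j] j by simp
    moreover have "rho ^ (2 * k - 1) / (rho ^ (k - 1) + 1) \<ge> 0" using rho_gt1 by simp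
    moreover have e: "mu (k + 1) (Some (2 ^ k - 1)) j
              = rho ^ (2 * k - 1) / (rho ^ (k - 1) + 1) * (cvec k j - piv k j)"
      using B j by blast
    ultimately show "mu (k + 1) (Some (2 ^ k - 1)) j \<ge> 0" unfolding e by (metis mult_nonneg_nonneg)
  qed
qed

end
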